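(* Let $\mathrm{M}$ be a (loopless) matroid of rank $d+1$. For every $J\subseteq[d]$, $N_J(\mathrm{U}_{d+1})\le N_J(\mathrm{M})$.
   Context: $\mathrm{U}_{d+1}$ is the Boolean matroid on $d+1$ elements. For $J=\{j_1<\cdots<j_m\}\subseteq[d]=\{1,\dots,d\}$, $N_J(\mathrm{M})$ is the number of chains of flats $G_1\subsetneq\cdots\subsetneq G_m$ of $\mathrm{M}$ with $\operatorname{rk}(G_\ell)=j_\ell$ for all $\ell$. *)

theory Defs
  imports Main
begin

definition matroid :: "'a set \<Rightarrow> ('a set \<Rightarrow> bool) \<Rightarrow> bool" where
  "matroid E indep \<longleftrightarrow>
     finite E \<and>
     (\<forall>I. indep I \<longrightarrow> I \<subseteq> E) \<and>
     indep {} \<and>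
     (\<forall>I J. indep J \<and> I \<subseteq> J \<longrightarrow> indep I) \<and>
     (\<forall>I J. indep I \<and> indep J \<and> card I < card J \<longrightarrow>
        (\<exists>x\<in>J - I. indep (insert x I)))"

definition loopless :: "'a set \<Rightarrow> ('a set \<Rightarrow> bool) \<Rightarrow> bool" where
  "loopless E indep \<longleftrightarrow> (\<forall>x\<in>E. indep {x})"

definition mrank :: "('a set \<Rightarrow> bool) \<Rightarrow> 'a set \<Rightarrow> nat" where
  "mrank indep X = Max {card I | I. I \<subseteq> X \<and> indep I}"

definition flat :: "'a set \<Rightarrow> ('a set \<Rightarrow> bool) \<Rightarrow> 'a set \<Rightarrow> bool" where
  "flat E indep F \<longleftrightarrow> F \<subseteq> E \<and>
     (\<forall>x\<in>E - F. mrank indep (insert x F) > mrank indep F)"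

text \<open>N_J(M): number of chains of flats G_{j_1} \<subset> ... \<subset> G_{j_m} with rk G_j = j,
  encoded as functions indexed by J (value {} outside J).\<close>
definition chains_J :: "'a set \<Rightarrow> ('a set \<Rightarrow> bool) \<Rightarrow> nat set \<Rightarrow> (nat \<Rightarrow> 'a set) set" where
  "chains_J E indep J = {G.
     (\<forall>j\<in>J. flat E indep (G j) \<and> mrank indep (G j) = j) \<and>
     (\<forall>j\<in>J. \<forall>k\<in>J. j < k \<longrightarrow> G j \<subset> G k) \<and>
     (\<forall>j. j \<notin> J \<longrightarrow> G j = {})}"

definition N_J :: "'a set \<Rightarrow> ('a set \<Rightarrow> bool) \<Rightarrow> nat set \<Rightarrow> nat" where
  "N_J E indep J = card (chains_J E indep J)"

definition boolean_indep :: "nat \<Rightarrow> nat set \<Rightarrow> bool" where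
  "boolean_indep d I \<longleftrightarrow> I \<subseteq> {0..d}"

end

theory Submission
  imports Defs "HOL-Library.FuncSet"
begin

lemma indep_sub: "matroid E indep \<Longrightarrow> indep I \<Longrightarrow> I \<subseteq> E"
  unfolding matroid_def by blast

lemma indep_mono: "matroid E indep \<Longrightarrow> indep J \<Longrightarrow> I \<subseteq> J \<Longrightarrow> indep I"
  unfolding matroid_def by blast

lemma indep_aug: "matroid E indep \<Longrightarrow> indep I \<Longrightarrow> indep J \<Longrightarrow> card I < card J
   \<Longrightarrow> \<exists>x\<in>J - I. indep (insert x I)"
  unfolding matroid_def by blast

lemma indep_finite: "matroid E indep \<Longrightarrow> indep I \<Longrightarrow> finite I"
  unfolding matroid_def by (meson finite_subset)

lemma rank_set_finite:
  assumes "matroid E indep"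
  shows "finite {card I | I. I \<subseteq> X \<and> indep I}"
proof -
  have "{card I | I. I \<subseteq> X \<and> indep I} \<subseteq> {0..card E}"
  proof
    fix n assume "n \<in> {card I | I. I \<subseteq> X \<and> indep I}"
    then obtain I where "n = card I" "indep I" by blast
    moreover have "finite E" using assms unfolding matroid_def by blast
    ultimately show "n \<in> {0..card E}" using indep_sub[OF assms] card_mono by fastforce
  qed
  then show ?thesis using finite_subset by blast
qed

lemma rank_ge:
  assumes "matroid E indep" "indep I" "I \<subseteq> X"
  shows "card I \<le> mrank indep X"
  unfolding mrank_def using rank_set_finite[OF assms(1)] assms(2,3)
  by (intro Max_ge) auto

lemma rank_le:
  assumes "matroid E indep" "\<And>I. indep I \<Longrightarrow> I \<subseteq> X \<Longrightarrow> card I \<le> k"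
  shows "mrank indep X \<le> k"
proof -
  have "indep {}" using assms(1) unfolding matroid_def by blast
  then show ?thesis unfolding mrank_def using rank_set_finite[OF assms(1)] assms(2)
    by (intro Max.boundedI) auto
qed

lemma rank_attained:
  assumes "matroid E indep"
  shows "\<exists>I. I \<subseteq> X \<and> indep I \<and> card I = mrank indep X"
proof -
  have "indep {}" using assms(1) unfolding matroid_def by blast
  then have "mrank indep X \<in> {card I | I. I \<subseteq> X \<and> indep I}"
    unfolding mrank_def using rank_set_finite[OF assms(1)] by (intro Max_in) auto
  then show ?thesis by auto
qed

definition cl :: "'a set \<Rightarrow> ('a set \<Rightarrow> bool) \<Rightarrow> 'a set \<Rightarrow> 'a set" where
  "cl E indep S = {x \<in> E. x \<in> S \<or> \<not> indep (insert x S)}"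

lemma cl_rank:
  assumes "matroid E indep" "indep S"
  shows "mrank indep (cl E indep S) = card S"
proof (rule antisym)
  show "card S \<le> mrank indep (cl E indep S)"
    using assms indep_sub[OF assms] by (intro rank_ge) (auto simp: cl_def)
  show "mrank indep (cl E indep S) \<le> card S"
  proof (rule rank_le[OF assms(1)])
    fix I assume I: "indep I" "I \<subseteq> cl E indep S"
    show "card I \<le> card S"
    proof (rule ccontr)
      assume "\<not> card I \<le> card S"
      then obtain x where "x \<in> I - S" "indep (insert x S)"
        using indep_aug[OF assms(1) assms(2) I(1)] by force
      then show False using I(2) by (auto simp: cl_def)
    qed
  qed
qed

lemma cl_flat:
  assumes "matroid E indep" "indep S"
  shows "flat E indep (cl E indep S)"
  unfolding flat_def
proof (intro conjI ballI)
  show "cl E indep S \<subseteq> E" by (auto simp: cl_def)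
  fix x assume x: "x \<in> E - cl E indep S"
  then have "x \<notin> S" "indep (insert x S)" by (auto simp: cl_def)
  then have "card (insert x S) = card S + 1"
    using indep_finite[OF assms] by simp
  moreover have "card (insert x S) \<le> mrank indep (insert x (cl E indep S))"
    using \<open>indep (insert x S)\<close> indep_sub[OF assms]
    by (intro rank_ge[OF assms(1)]) (auto simp: cl_def)
  ultimately show "mrank indep (cl E indep S) < mrank indep (insert x (cl E indep S))"
    using cl_rank[OF assms] by simp
qed

lemma cl_inj:
  assumes "matroid E indep" "indep B" "S \<subseteq> B" "T \<subseteq> B" "cl E indep S = cl E indep T"
  shows "S = T"
proof -
  have sub: "S \<subseteq> T" if "S \<subseteq> B" "T \<subseteq> B" "cl E indep S = cl E indep T" for S T
  proof
    fix x assume "x \<in> S"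
    then have "x \<in> cl E indep T" using that indep_sub[OF assms(1,2)]
      by (auto simp: cl_def[of E indep S])
    moreover have "indep (insert x T)"
      using \<open>x \<in> S\<close> that assms(1,2) by (intro indep_mono[OF assms(1) assms(2)]) auto
    ultimately show "x \<in> T" by (auto simp: cl_def)
  qed
  show ?thesis using sub[of S T] sub[of T S] assms by auto
qed

lemma cl_mono:
  assumes "matroid E indep" "S \<subseteq> T" "indep T"
  shows "cl E indep S \<subseteq> cl E indep T"
  unfolding cl_def using assms indep_mono[OF assms(1)]
  by auto (meson insert_mono)

lemma bool_rank:
  assumes "X \<subseteq> {0..d}"
  shows "mrank (boolean_indep d) X = card X"
proof -
  have fin: "finite {card I | I. I \<subseteq> X \<and> boolean_indep d I}"
  proof -
    have "{card I | I. I \<subseteq> X \<and> boolean_indep d I} \<subseteq> {0..card X}"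
      using assms by (auto intro!: card_mono finite_subset[of _ "{0..d}"])
    then show ?thesis using finite_subset by blast
  qed
  show ?thesis unfolding mrank_def
  proof (rule antisym)
    show "Max {card I |I. I \<subseteq> X \<and> boolean_indep d I} \<le> card X"
      using fin assms by (intro Max.boundedI)
        (auto simp: boolean_indep_def intro!: card_mono finite_subset[of _ "{0..d}"])
    show "card X \<le> Max {card I |I. I \<subseteq> X \<and> boolean_indep d I}"
      using fin assms by (intro Max_ge) (auto simp: boolean_indep_def)
  qed
qed

lemma chains_finite:
  assumes "finite E" "finite J"
  shows "finite (chains_J E indep J)"
proof -
  have "chains_J E indep J \<subseteq> (\<lambda>f. \<lambda>j. if j \<in> J then f j else {}) ` (PiE J (\<lambda>_. Pow E))"
  proof
    fix G assume G: "G \<in> chains_J E indep J"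
    have "G = (\<lambda>j. if j \<in> J then restrict G J j else {})"
      using G unfolding chains_J_def by (intro ext) auto
    moreover have "restrict G J \<in> PiE J (\<lambda>_. Pow E)"
      using G by (auto simp: chains_J_def flat_def)
    ultimately show "G \<in> (\<lambda>f. \<lambda>j. if j \<in> J then f j else {}) ` (PiE J (\<lambda>_. Pow E))"
      by blast
  qed
  moreover have "finite (PiE J (\<lambda>_. Pow E))" using assms by (intro finite_PiE) auto
  ultimately show ?thesis using finite_subset by blast
qed

theorem lemma4p13:
  fixes E :: "'a set" and indep :: "'a set \<Rightarrow> bool" and d :: nat and J :: "nat set"
  assumes "matroid E indep"
    and "loopless E indep"
    and "mrank indep E = d + 1"
    and "J \<subseteq> {1..d}"
  shows "N_J {0..d} (boolean_indep d) J \<le> N_J E indep J"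
proof -
  note M = assms(1)
  obtain B where B: "B \<subseteq> E" "indep B" "card B = d + 1"
    using rank_attained[OF M, of E] assms(3) by auto
  have finB: "finite B" using indep_finite[OF M B(2)] .
  obtain h where h: "bij_betw h {0..d} B"
    using finite_same_card_bij[of "{0..d}" B] finB B(3) by auto
  have hinj: "inj_on h {0..d}" and himg: "h ` {0..d} = B"
    using h by (auto simp: bij_betw_def)
  define F where "F G = (\<lambda>j. if j \<in> J then cl E indep (h ` G j) else {})" for G
  have Gsub: "G j \<subseteq> {0..d}" "card (G j) = j"
    if "G \<in> chains_J {0..d} (boolean_indep d) J" "j \<in> J" for G j
    using that bool_rank[of "G j" d] by (auto simp: chains_J_def flat_def)
  have indep_img: "indep (h ` X)" if "X \<subseteq> {0..d}" for X
    using that himg indep_mono[OF M B(2)] by blast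
  have "card (chains_J {0..d} (boolean_indep d) J) \<le> card (chains_J E indep J)"
  proof (rule card_inj_on_le)
    show "finite (chains_J E indep J)"
      using M assms(4) by (intro chains_finite) (auto simp: matroid_def intro: finite_subset)
    show "inj_on F (chains_J {0..d} (boolean_indep d) J)"
    proof (rule inj_onI)
      fix G G' assume G: "G \<in> chains_J {0..d} (boolean_indep d) J"
        and G': "G' \<in> chains_J {0..d} (boolean_indep d) J" and eq: "F G = F G'"
      show "G = G'"
      proof
        fix j show "G j = G' j"
        proof (cases "j \<in> J")
          case True
          then have "cl E indep (h ` G j) = cl E indep (h ` G' j)"
          proof -
            have "F G j = F G' j" using eq by simp
            then show ?thesis using True by (simp add: F_def)
          qed
          moreover have "h ` G j \<subseteq> B" "h ` G' j \<subseteq> B"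
            using image_mono[OF Gsub(1)[OF G True], of h] image_mono[OF Gsub(1)[OF G' True], of h]
              himg by simp_all
          ultimately have "h ` G j = h ` G' j"
            using cl_inj[OF M B(2)] by blast
          then show ?thesis
            using inj_on_image_eq_iff[OF hinj Gsub(1)[OF G True] Gsub(1)[OF G' True]] by simp
        next
          case False
          then show ?thesis using G G' by (auto simp: chains_J_def)
        qed
      qed
    qed
    show "F ` chains_J {0..d} (boolean_indep d) J \<subseteq> chains_J E indep J"
    proof
      fix H assume "H \<in> F ` chains_J {0..d} (boolean_indep d) J"
      then obtain G where G: "G \<in> chains_J {0..d} (boolean_indep d) J" and H: "H = F G"
        by blast
      have cardimg: "card (h ` G j) = j" if "j \<in> J" for j
        using card_image[OF inj_on_subset[OF hinj Gsub(1)[OF G that]]] Gsub(2)[OF G that] by simp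
      show "H \<in> chains_J E indep J"
        unfolding chains_J_def
      proof (intro CollectI conjI ballI allI impI)
        fix j assume j: "j \<in> J"
        show "flat E indep (H j)" using H j cl_flat[OF M indep_img[OF Gsub(1)[OF G j]]]
          by (simp add: F_def)
        show "mrank indep (H j) = j" using H j cl_rank[OF M indep_img[OF Gsub(1)[OF G j]]]
            cardimg[OF j] by (simp add: F_def)
      next
        fix j k assume j: "j \<in> J" and k: "k \<in> J" and jk: "j < k"
        have "G j \<subset> G k" using G j k jk by (auto simp: chains_J_def)
        then have sub: "h ` G j \<subseteq> h ` G k" by auto
        have le: "cl E indep (h ` G j) \<subseteq> cl E indep (h ` G k)"
          by (rule cl_mono[OF M sub indep_img[OF Gsub(1)[OF G k]]])
        have "h ` G j \<noteq> h ` G k" using cardimg[OF j] cardimg[OF k] jk by auto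
        then have "cl E indep (h ` G j) \<noteq> cl E indep (h ` G k)"
          using cl_inj[OF M B(2), of "h ` G j" "h ` G k"]
            image_mono[OF Gsub(1)[OF G j], of h] image_mono[OF Gsub(1)[OF G k], of h] himg
          by blast
        then show "H j \<subset> H k" using le H j k by (auto simp: F_def)
      next
        fix j assume "j \<notin> J" then show "H j = {}" using H by (simp add: F_def)
      qed
    qed
  qed
  then show ?thesis by (simp add: N_J_def)
qed

end
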